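(* Let $k\ge2$ and let $H$ be a $k$-uniform hypergraph of maximum degree $\Delta$ with a given perfect matching $M$. Then $Z_{\mathrm{pm}}(H,M,z)\neq0$ for all $z\in\mathbb C$ with $|z|\le\big((\Delta-1+k)e\big)^{-1}$.
   Context: A perfect matching of $H$ is a set of pairwise disjoint hyperedges covering all vertices. $Z_{\mathrm{pm}}(H,M,z)=\sum_{M'}z^{|M\triangle M'|}$, the sum over all perfect matchings $M'$ of $H$. The degree of a vertex is the number of hyperedges containing it. *)

theory Defs
  imports "HOL-Analysis.Analysis"
begin

definition hypergraph :: "'a set \<Rightarrow> 'a set set \<Rightarrow> bool" where
  "hypergraph V E \<longleftrightarrow> finite V \<and> (\<forall>e\<in>E. e \<subseteq> V)"

definition uniform :: "nat \<Rightarrow> 'a set set \<Rightarrow> bool" where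
  "uniform k E \<longleftrightarrow> (\<forall>e\<in>E. card e = k)"

definition hdegree :: "'a set set \<Rightarrow> 'a \<Rightarrow> nat" where
  "hdegree E v = card {e\<in>E. v \<in> e}"

definition max_degree :: "'a set \<Rightarrow> 'a set set \<Rightarrow> nat" where
  "max_degree V E = Max (insert 0 (hdegree E ` V))"

definition perfect_matching :: "'a set \<Rightarrow> 'a set set \<Rightarrow> 'a set set \<Rightarrow> bool" where
  "perfect_matching V E M \<longleftrightarrow> M \<subseteq> E \<and>
     (\<forall>e\<in>M. \<forall>f\<in>M. e \<noteq> f \<longrightarrow> e \<inter> f = {}) \<and> \<Union>M = V"

definition Z_pm :: "'a set \<Rightarrow> 'a set set \<Rightarrow> 'a set set \<Rightarrow> complex \<Rightarrow> complex" where
  "Z_pm V E M z = (\<Sum>M'\<in>{M'. perfect_matching V E M'}. z ^ card (M - M' \<union> (M' - M)))"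

end

theory Submission imports Defs begin

locale pmz =
  fixes V :: "'a set" and E :: "'a set set" and M :: "'a set set" and k :: nat
    and lam :: complex and c :: real
  assumes finV: "finite V" and EV: "\<forall>e\<in>E. e \<subseteq> V" and unif: "\<forall>e\<in>E. card e = k"
    and k1: "k \<ge> 1" and pm: "perfect_matching V E M" and c0: "c > 0" and c1: "c \<le> 1"
    and cond: "\<forall>v\<in>V. real (card {f\<in>E. v \<in> f \<and> f \<notin> M}) * cmod lam \<le> c^(k-1) * (1-c)"
begin

definition pms :: "'a set \<Rightarrow> 'a set set set" where
  "pms U = {N. N \<subseteq> E \<and> (\<forall>e\<in>N. \<forall>f\<in>N. e \<noteq> f \<longrightarrow> e \<inter> f = {}) \<and> \<Union>N = U}"

definition P :: "'a set \<Rightarrow> complex" where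
  "P U = (\<Sum>N\<in>pms U. lam ^ card (N - M))"

definition full :: "'a set \<Rightarrow> 'a set set" where
  "full U = {B\<in>M. B \<subseteq> U}"

definition S :: "'a set \<Rightarrow> 'a set" where
  "S U = \<Union>(full U)"

lemma finE: "finite E"
proof -
  have "E \<subseteq> Pow V" using EV by auto
  thus ?thesis using finV finite_subset by blast
qed

lemma ne: "e \<in> E \<Longrightarrow> e \<noteq> {}"
  using unif k1 by fastforce

lemma finedge: "e \<in> E \<Longrightarrow> finite e"
  using EV finV finite_subset by blast

lemma ME: "M \<subseteq> E" and Mdisj: "\<And>e f. e \<in> M \<Longrightarrow> f \<in> M \<Longrightarrow> e \<noteq> f \<Longrightarrow> e \<inter> f = {}"
  and MV: "\<Union>M = V"
  using pm unfolding perfect_matching_def by auto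

lemma M_unique: "B \<in> M \<Longrightarrow> B' \<in> M \<Longrightarrow> v \<in> B \<Longrightarrow> v \<in> B' \<Longrightarrow> B = B'"
  using Mdisj by blast

lemma finM: "finite M" using ME finE finite_subset by blast

lemma finpms: "finite (pms U)"
proof -
  have "pms U \<subseteq> Pow E" unfolding pms_def by auto
  thus ?thesis using finE finite_subset by blast
qed

lemma pms_empty: "pms {} = {{}}"
proof -
  have "N = {}" if "N \<in> pms {}" for N
  proof -
    have "N \<subseteq> E" "\<Union>N = {}" using that unfolding pms_def by auto
    thus ?thesis using ne by blast
  qed
  moreover have "{} \<in> pms {}" unfolding pms_def by auto
  ultimately show ?thesis by blast
qed

lemma P_empty: "P {} = 1"
  unfolding P_def pms_empty by simp

lemma P_rec:
  assumes "U \<subseteq> V" "v \<in> U"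
  shows "P U = (\<Sum>f\<in>{f\<in>E. v \<in> f \<and> f \<subseteq> U}. (if f \<in> M then 1 else lam) * P (U - f))"
proof -
  define F where "F = {f\<in>E. v \<in> f \<and> f \<subseteq> U}"
  define h where "h N = lam ^ card (N - M)" for N
  define g where "g N = (THE f. f \<in> N \<and> v \<in> f)" for N :: "'a set set"
  have gN: "g N = f" if "N \<in> pms U" "f \<in> N" "v \<in> f" for N f
  proof -
    have "\<And>f'. f' \<in> N \<and> v \<in> f' \<Longrightarrow> f' = f" using that unfolding pms_def by blast
    thus ?thesis unfolding g_def using that by (metis (mono_tags, lifting) the_equality)
  qed
  have gex: "\<exists>f\<in>N. v \<in> f" if "N \<in> pms U" for N
    using that assms unfolding pms_def by auto
  have gF: "g ` pms U \<subseteq> F"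
  proof
    fix x assume "x \<in> g ` pms U"
    then obtain N where N: "N \<in> pms U" "x = g N" by auto
    then obtain f where f: "f \<in> N" "v \<in> f" using gex by blast
    with N gN have "x = f" by simp
    thus "x \<in> F" using N f unfolding pms_def F_def by auto
  qed
  have finF: "finite F" unfolding F_def using finE by auto
  have "P U = (\<Sum>f\<in>F. \<Sum>N\<in>{N. N \<in> pms U \<and> g N = f}. h N)"
    unfolding P_def h_def using sum.group[OF finpms finF gF, of h] by (simp add: h_def)
  also have "\<dots> = (\<Sum>f\<in>F. (if f \<in> M then 1 else lam) * P (U - f))"
  proof (rule sum.cong[OF refl])
    fix f assume fF: "f \<in> F"
    have eqset: "{N. N \<in> pms U \<and> g N = f} = {N \<in> pms U. f \<in> N}"
    proof -
      have "N \<in> pms U \<Longrightarrow> g N = f \<Longrightarrow> f \<in> N" for N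
        using gex gN fF by blast
      moreover have "N \<in> pms U \<Longrightarrow> f \<in> N \<Longrightarrow> g N = f" for N
        using gN fF unfolding F_def by blast
      ultimately show ?thesis by blast
    qed
    have fnot: "f \<notin> N'" if "N' \<in> pms (U - f)" for N'
      using that fF unfolding pms_def F_def by blast
    have bij: "bij_betw (insert f) (pms (U - f)) {N \<in> pms U. f \<in> N}"
    proof (rule bij_betw_byWitness[where f'="\<lambda>N. N - {f}"])
      show "\<forall>a\<in>pms (U - f). insert f a - {f} = a" using fnot by auto
      show "\<forall>a'\<in>{N \<in> pms U. f \<in> N}. insert f (a' - {f}) = a'" by auto
      show "insert f ` pms (U - f) \<subseteq> {N \<in> pms U. f \<in> N}"
      proof
        fix x assume "x \<in> insert f ` pms (U - f)"
        then obtain N where N: "N \<in> pms (U - f)" "x = insert f N" by auto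
        have d: "\<forall>e\<in>N. \<forall>f\<in>N. e \<noteq> f \<longrightarrow> e \<inter> f = {}" and s: "N \<subseteq> E" and u: "\<Union>N = U - f"
          using N unfolding pms_def by auto
        have "\<forall>e\<in>x. \<forall>g\<in>x. e \<noteq> g \<longrightarrow> e \<inter> g = {}"
        proof (intro ballI impI)
          fix e g assume "e \<in> x" "g \<in> x" "e \<noteq> g"
          then consider "e = f" "g \<in> N" | "g = f" "e \<in> N" | "e \<in> N" "g \<in> N"
            using N(2) by blast
          thus "e \<inter> g = {}"
          proof cases
            case 1 thus ?thesis using u by blast
          next
            case 2 thus ?thesis using u by blast
          next
            case 3 thus ?thesis using d \<open>e \<noteq> g\<close> by blast
          qed
        qed
        moreover have "x \<subseteq> E" using s fF N(2) unfolding F_def by auto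
        moreover have "\<Union>x = U" using u fF N(2) unfolding F_def by auto
        ultimately show "x \<in> {N \<in> pms U. f \<in> N}" using N(2) unfolding pms_def by auto
      qed
      show "(\<lambda>N. N - {f}) ` {N \<in> pms U. f \<in> N} \<subseteq> pms (U - f)"
      proof
        fix x assume "x \<in> (\<lambda>N. N - {f}) ` {N \<in> pms U. f \<in> N}"
        then obtain N where N: "N \<in> pms U" "f \<in> N" "x = N - {f}" by auto
        have "\<Union>(N - {f}) = U - f"
        proof
          show "\<Union>(N - {f}) \<subseteq> U - f" using N unfolding pms_def by blast
          show "U - f \<subseteq> \<Union>(N - {f})" using N unfolding pms_def by blast
        qed
        thus "x \<in> pms (U - f)" using N unfolding pms_def by auto
      qed
    qed
    have "(\<Sum>N\<in>{N. N \<in> pms U \<and> g N = f}. h N) = (\<Sum>N\<in>{N \<in> pms U. f \<in> N}. h N)"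
      using eqset by simp
    also have "\<dots> = (\<Sum>N\<in>pms (U - f). h (insert f N))"
      by (rule sum.reindex_bij_betw[OF bij, symmetric])
    also have "\<dots> = (\<Sum>N\<in>pms (U - f). (if f \<in> M then 1 else lam) * h N)"
    proof (rule sum.cong[OF refl])
      fix N assume N: "N \<in> pms (U - f)"
      have NE: "N \<subseteq> E" using N unfolding pms_def by simp
      have "finite N" using finite_subset[OF NE finE] .
      hence finN: "finite (N - M)" by simp
      have "f \<notin> N" using fnot N by blast
      show "h (insert f N) = (if f \<in> M then 1 else lam) * h N"
      proof (cases "f \<in> M")
        case True
        hence "insert f N - M = N - M" by auto
        thus ?thesis using True unfolding h_def by simp
      next
        case False
        hence "insert f N - M = insert f (N - M)" by auto
        moreover have "f \<notin> N - M" using \<open>f \<notin> N\<close> by auto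
        ultimately show ?thesis using False finN unfolding h_def by simp
      qed
    qed
    also have "\<dots> = (if f \<in> M then 1 else lam) * P (U - f)"
      unfolding P_def h_def by (simp add: sum_distrib_left)
    finally show "(\<Sum>N\<in>{N. N \<in> pms U \<and> g N = f}. h N) = (if f \<in> M then 1 else lam) * P (U - f)" .
  qed
  finally show ?thesis unfolding F_def .
qed


lemma full_diff: "full (U - X) = {B\<in>full U. B \<inter> X = {}}"
  unfolding full_def by auto

lemma S_sub: "S U \<subseteq> U" unfolding S_def full_def by auto

lemma S_diff: "S (U - X) = S U - \<Union>{B\<in>full U. B \<inter> X \<noteq> {}}"
proof
  show "S (U - X) \<subseteq> S U - \<Union>{B\<in>full U. B \<inter> X \<noteq> {}}"
  proof
    fix x assume "x \<in> S (U - X)"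
    then obtain B where B: "B \<in> full U" "B \<inter> X = {}" "x \<in> B" unfolding S_def full_diff by auto
    have "x \<notin> \<Union>{B\<in>full U. B \<inter> X \<noteq> {}}"
    proof
      assume "x \<in> \<Union>{B\<in>full U. B \<inter> X \<noteq> {}}"
      then obtain B' where "B' \<in> full U" "B' \<inter> X \<noteq> {}" "x \<in> B'" by auto
      with B M_unique[of B B' x] show False unfolding full_def by auto
    qed
    thus "x \<in> S U - \<Union>{B\<in>full U. B \<inter> X \<noteq> {}}" using B unfolding S_def by auto
  qed
  show "S U - \<Union>{B\<in>full U. B \<inter> X \<noteq> {}} \<subseteq> S (U - X)"
    unfolding S_def full_diff by auto
qed

lemma full_S: "full (S U) = full U"
  unfolding full_def S_def by auto

lemma Msat: "T \<subseteq> full U \<Longrightarrow> {B\<in>full U. B \<inter> \<Union>T \<noteq> {}} = T"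
proof -
  assume T: "T \<subseteq> full U"
  have "B \<in> T" if h: "B \<in> full U" "B \<inter> \<Union>T \<noteq> {}" for B
  proof -
    obtain B' x where "B' \<in> T" "x \<in> B" "x \<in> B'" using h by auto
    moreover have "B \<in> M" "B' \<in> M" using h T \<open>B' \<in> T\<close> unfolding full_def by auto
    ultimately show ?thesis using M_unique by metis
  qed
  moreover have "B \<inter> \<Union>T \<noteq> {}" if "B \<in> T" for B
  proof -
    have "B \<noteq> {}" using that T ME ne unfolding full_def by auto
    thus ?thesis using that by auto
  qed
  ultimately show ?thesis using T by auto
qed

lemma S_diff_sat: "S U = U \<Longrightarrow> T \<subseteq> full U \<Longrightarrow> S (U - \<Union>T) = U - \<Union>T"
  using S_diff[of U "\<Union>T"] Msat[of T U] by simp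

lemma card_meet:
  assumes "T \<subseteq> M" "\<forall>B\<in>T. B \<inter> X \<noteq> {}" "finite X"
  shows "card T \<le> card X"
proof -
  define g where "g B = (SOME x. x \<in> B \<inter> X)" for B
  have gi: "g B \<in> B \<inter> X" if "B \<in> T" for B
    using that assms(2) unfolding g_def by (metis ex_in_conv someI_ex)
  have "inj_on g T"
  proof (rule inj_onI)
    fix B B' assume "B \<in> T" "B' \<in> T" "g B = g B'"
    thus "B = B'" using gi[of B] gi[of B'] assms(1) M_unique[of B B' "g B"] by auto
  qed
  moreover have "g ` T \<subseteq> X" using gi by auto
  ultimately show ?thesis using card_inj_on_le assms(3) by blast
qed

lemma chain:
  assumes A: "\<And>W B. W \<subseteq> V \<Longrightarrow> card W < n \<Longrightarrow> S W = W \<Longrightarrow> B \<in> M \<Longrightarrow> B \<subseteq> W \<Longrightarrow>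
      c * cmod (P (W - B)) \<le> cmod (P W)"
    and U: "U \<subseteq> V" "S U = U" "card U < n"
  shows "T \<subseteq> full U \<Longrightarrow> c ^ card T * cmod (P (U - \<Union>T)) \<le> cmod (P U)"
proof -
  assume T: "T \<subseteq> full U"
  have "T \<subseteq> M" using T unfolding full_def by auto
  hence "finite T" using finM finite_subset by blast
  thus ?thesis using T
  proof (induction T rule: finite_induct)
    case empty thus ?case by simp
  next
    case (insert B T)
    define W where "W = U - \<Union>T"
    have TU: "T \<subseteq> full U" using insert by auto
    have WV: "W \<subseteq> V" using U unfolding W_def by auto
    have finU: "finite U" using U finV finite_subset by blast
    have cW: "card W < n" using U card_mono[OF finU, of W] unfolding W_def by auto
    have SW: "S W = W" unfolding W_def using S_diff_sat[OF U(2) TU] .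
    have BM: "B \<in> M" "B \<subseteq> U" using insert unfolding full_def by auto
    have "B \<inter> \<Union>T = {}"
    proof -
      have "B \<inter> B' = {}" if "B' \<in> T" for B'
        using that insert Mdisj[of B B'] TU unfolding full_def by auto
      thus ?thesis by auto
    qed
    hence BW: "B \<subseteq> W" using BM unfolding W_def by auto
    have st: "c * cmod (P (W - B)) \<le> cmod (P W)" using A[OF WV cW SW BM(1) BW] .
    have ih: "c ^ card T * cmod (P W) \<le> cmod (P U)" using insert.IH[OF TU] unfolding W_def .
    have eq: "U - \<Union>(insert B T) = W - B" unfolding W_def by auto
    have "c ^ card (insert B T) * cmod (P (U - \<Union>(insert B T))) = c ^ card T * (c * cmod (P (W - B)))"
      using insert eq by simp
    also have "\<dots> \<le> c ^ card T * cmod (P W)"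
      using st c0 by (simp add: mult_left_mono)
    also have "\<dots> \<le> cmod (P U)" using ih .
    finally show ?case .
  qed
qed


lemma cfact: "v \<in> V \<Longrightarrow> F \<subseteq> {f\<in>E. v \<in> f \<and> f \<notin> M} \<Longrightarrow> real (card F) * cmod lam \<le> c^(k-1) * (1-c)"
proof -
  assume v: "v \<in> V" and F: "F \<subseteq> {f\<in>E. v \<in> f \<and> f \<notin> M}"
  have "finite {f\<in>E. v \<in> f \<and> f \<notin> M}" using finE by auto
  hence "card F \<le> card {f\<in>E. v \<in> f \<and> f \<notin> M}" using F card_mono by blast
  hence "real (card F) * cmod lam \<le> real (card {f\<in>E. v \<in> f \<and> f \<notin> M}) * cmod lam"
    by (simp add: mult_right_mono)
  thus ?thesis using cond v by auto
qed

lemma main: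
  assumes "U \<subseteq> V"
  shows "(S U = U \<longrightarrow> (\<forall>B\<in>M. B \<subseteq> U \<longrightarrow> c * cmod (P (U - B)) \<le> cmod (P U)))
         \<and> cmod (P U) \<le> cmod (P (S U))"
  using assms
proof (induction "card U" arbitrary: U rule: less_induct)
  case less
  have UV: "U \<subseteq> V" by fact
  have finU: "finite U" using UV finV finite_subset by blast
  have H: "(S W = W \<longrightarrow> (\<forall>B\<in>M. B \<subseteq> W \<longrightarrow> c * cmod (P (W - B)) \<le> cmod (P W))) \<and> cmod (P W) \<le> cmod (P (S W))"
    if a: "W \<subseteq> V" "card W < card U" for W
    by (rule less.hyps[OF a(2) a(1)])
  have IH: "(S W = W \<longrightarrow> (\<forall>B\<in>M. B \<subseteq> W \<longrightarrow> c * cmod (P (W - B)) \<le> cmod (P W))) \<and> cmod (P W) \<le> cmod (P (S W))"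
    if a: "W \<subseteq> U" "W \<noteq> U" for W
  proof -
    have "W \<subset> U" using a by (rule psubsetI)
    hence "card W < card U" by (rule psubset_card_mono[OF finU])
    moreover have "W \<subseteq> V" using a(1) UV by (rule subset_trans)
    ultimately show ?thesis using H by simp
  qed
  have A: "c * cmod (P (W - B)) \<le> cmod (P W)"
    if a: "W \<subseteq> V" "card W < card U" "S W = W" "B \<in> M" "B \<subseteq> W" for W B
  proof -
    have "S W = W \<longrightarrow> (\<forall>B\<in>M. B \<subseteq> W \<longrightarrow> c * cmod (P (W - B)) \<le> cmod (P W))"
      using H[OF a(1) a(2)] by (rule conjunct1)
    hence "\<forall>B\<in>M. B \<subseteq> W \<longrightarrow> c * cmod (P (W - B)) \<le> cmod (P W)" using a(3) by (rule mp)
    hence "B \<subseteq> W \<longrightarrow> c * cmod (P (W - B)) \<le> cmod (P W)" using a(4) by (rule bspec)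
    thus ?thesis using a(5) by (rule mp)
  qed
  have ckpos: "c ^ (k - 1) > 0" using c0 by simp
  show ?case
  proof (cases "S U = U")
    case True
    have "c * cmod (P (U - B)) \<le> cmod (P U)" if BM: "B \<in> M" "B \<subseteq> U" for B
    proof -
      have "B \<noteq> {}" using BM ME ne by auto
      then obtain v where vB: "v \<in> B" by auto
      have vU: "v \<in> U" using vB BM by auto
      define F where "F = {f\<in>E. v \<in> f \<and> f \<subseteq> U \<and> f \<notin> M}"
      have finF: "finite F" unfolding F_def using finE by auto
      have Fall: "{f\<in>E. v \<in> f \<and> f \<subseteq> U} = insert B F"
      proof -
        have "f = B" if "f \<in> E" "v \<in> f" "f \<in> M" for f using M_unique[of f B v] that BM vB by auto
        thus ?thesis unfolding F_def using BM vB ME by auto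
      qed
      have BF: "B \<notin> F" unfolding F_def using BM by auto
      have rec: "P U = P (U - B) + lam * (\<Sum>f\<in>F. P (U - f))"
      proof -
        have "P U = (\<Sum>f\<in>insert B F. (if f \<in> M then 1 else lam) * P (U - f))"
          using P_rec[OF UV vU] Fall by simp
        also have "\<dots> = P (U - B) + (\<Sum>f\<in>F. (if f \<in> M then 1 else lam) * P (U - f))"
          using finF BF BM by simp
        also have "(\<Sum>f\<in>F. (if f \<in> M then 1 else lam) * P (U - f)) = (\<Sum>f\<in>F. lam * P (U - f))"
          by (rule sum.cong) (auto simp: F_def)
        finally show ?thesis by (simp add: sum_distrib_left)
      qed
      have each: "c^(k-1) * cmod (P (U - f)) \<le> cmod (P (U - B))" if fF: "f \<in> F" for f
      proof -
        have fE: "f \<in> E" "v \<in> f" "f \<subseteq> U" "f \<notin> M" using fF unfolding F_def by auto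
        define T where "T = {B'\<in>full U. B' \<inter> f \<noteq> {}}"
        have b1: "cmod (P (U - f)) \<le> cmod (P (S (U - f)))"
        proof -
        have "U - f \<noteq> U" using fE(2) vU by blast
        thus ?thesis by (rule conjunct2[OF IH[OF Diff_subset]])
      qed
        have SUf: "S (U - f) = U - \<Union>T" using S_diff[of U f] True unfolding T_def by simp
        have BT: "B \<in> T" unfolding T_def full_def using BM vB fE by auto
        have eqs: "U - \<Union>T = (U - B) - \<Union>(T - {B})" using BT by auto
        have satB: "S (U - B) = U - B" using S_diff_sat[OF True, of "{B}"] BM unfolding full_def by auto
        have T'sub: "T - {B} \<subseteq> full (U - B)"
        proof
          fix B' assume "B' \<in> T - {B}"
          hence "B' \<in> M" "B' \<subseteq> U" "B' \<noteq> B" unfolding T_def full_def by auto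
          hence "B' \<inter> B = {}" using Mdisj BM by blast
          thus "B' \<in> full (U - B)" using \<open>B' \<in> M\<close> \<open>B' \<subseteq> U\<close> unfolding full_def by auto
        qed
        have cUB: "card (U - B) < card U"
        proof -
          have "U - B \<subset> U" using vB vU by blast
          thus ?thesis using psubset_card_mono[OF finU] by blast
        qed
        have ch: "c ^ card (T - {B}) * cmod (P ((U - B) - \<Union>(T - {B}))) \<le> cmod (P (U - B))"
        proof -
          have UBV: "U - B \<subseteq> V" using UV by auto
          show ?thesis by (rule chain[OF A UBV satB cUB T'sub])
        qed
        have cardT: "card T \<le> k"
        proof -
          have "card T \<le> card f"
            by (rule card_meet) (auto simp: T_def full_def finedge fE)
          thus ?thesis using unif fE by auto
        qed
        have finT: "finite T" using finM unfolding T_def full_def by auto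
        have "card (T - {B}) \<le> k - 1" using cardT BT finT by auto
        hence pw: "c ^ (k-1) \<le> c ^ card (T - {B})" using c0 c1 by (simp add: power_decreasing)
        have "c^(k-1) * cmod (P (U - f)) \<le> c^(k-1) * cmod (P (S (U - f)))"
          using b1 ckpos by simp
        also have "\<dots> \<le> c ^ card (T - {B}) * cmod (P ((U - B) - \<Union>(T - {B})))"
          using pw SUf eqs by (simp add: mult_right_mono)
        also have "\<dots> \<le> cmod (P (U - B))" using ch .
        finally show ?thesis .
      qed
      have cF: "real (card F) * cmod lam \<le> c^(k-1) * (1-c)"
        using cfact[of v F] vU UV unfolding F_def by auto
      have "c^(k-1) * cmod (lam * (\<Sum>f\<in>F. P (U - f))) \<le> cmod lam * (\<Sum>f\<in>F. c^(k-1) * cmod (P (U - f)))"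
      proof -
        have "cmod (\<Sum>f\<in>F. P (U - f)) \<le> (\<Sum>f\<in>F. cmod (P (U - f)))" by (rule norm_sum)
        hence "c^(k-1) * cmod (\<Sum>f\<in>F. P (U - f)) \<le> (\<Sum>f\<in>F. c^(k-1) * cmod (P (U - f)))"
          using ckpos by (simp add: sum_distrib_left[symmetric])
        thus ?thesis by (simp add: norm_mult mult.left_commute mult_left_mono)
      qed
      also have "\<dots> \<le> cmod lam * (\<Sum>f\<in>F. cmod (P (U - B)))"
      proof (rule mult_left_mono)
        show "(\<Sum>f\<in>F. c^(k-1) * cmod (P (U - f))) \<le> (\<Sum>f\<in>F. cmod (P (U - B)))"
          by (rule sum_mono) (rule each)
      qed simp
      also have "\<dots> = real (card F) * cmod lam * cmod (P (U - B))" by simp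
      also have "\<dots> \<le> c^(k-1) * (1-c) * cmod (P (U - B))"
        using cF by (simp add: mult_right_mono)
      finally have small: "c^(k-1) * cmod (lam * (\<Sum>f\<in>F. P (U - f))) \<le> c^(k-1) * (1-c) * cmod (P (U - B))" .
      have "cmod (P U) \<ge> cmod (P (U - B)) - cmod (lam * (\<Sum>f\<in>F. P (U - f)))"
        using rec norm_diff_ineq[of "P (U - B)" "lam * (\<Sum>f\<in>F. P (U - f))"] by simp
      hence "c^(k-1) * cmod (P U) \<ge> c^(k-1) * cmod (P (U - B)) - c^(k-1) * cmod (lam * (\<Sum>f\<in>F. P (U - f)))"
        using ckpos by (simp add: right_diff_distrib[symmetric])
      hence "c^(k-1) * cmod (P U) \<ge> c^(k-1) * (c * cmod (P (U - B)))"
        using small by (simp add: algebra_simps)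
      thus ?thesis using ckpos by simp
    qed
    thus ?thesis using True by auto
  next
    case False
    then obtain v where vU: "v \<in> U" "v \<notin> S U" using S_sub by blast
    define F where "F = {f\<in>E. v \<in> f \<and> f \<subseteq> U}"
    have finF: "finite F" unfolding F_def using finE by auto
    have FnM: "f \<notin> M" if "f \<in> F" for f
      using that vU unfolding F_def S_def full_def by auto
    have rec: "P U = lam * (\<Sum>f\<in>F. P (U - f))"
    proof -
      have "P U = (\<Sum>f\<in>F. (if f \<in> M then 1 else lam) * P (U - f))"
        using P_rec[OF UV vU(1)] unfolding F_def by simp
      also have "\<dots> = (\<Sum>f\<in>F. lam * P (U - f))"
        by (rule sum.cong) (auto simp: FnM)
      finally show ?thesis by (simp add: sum_distrib_left)
    qed
    have SUV: "S U \<subseteq> V" using S_sub UV by auto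
    have cSU: "card (S U) < card U"
    proof -
      have "S U \<subset> U" using S_sub False by blast
      thus ?thesis using psubset_card_mono[OF finU] by blast
    qed
    have satS: "S (S U) = S U" using full_S[of U] unfolding S_def by simp
    have each: "c^(k-1) * cmod (P (U - f)) \<le> cmod (P (S U))" if fF: "f \<in> F" for f
    proof -
      have fE: "f \<in> E" "v \<in> f" "f \<subseteq> U" using fF unfolding F_def by auto
      define T where "T = {B'\<in>full U. B' \<inter> f \<noteq> {}}"
      have b1: "cmod (P (U - f)) \<le> cmod (P (S (U - f)))"
      proof -
        have "U - f \<noteq> U" using fE(2) vU by blast
        thus ?thesis by (rule conjunct2[OF IH[OF Diff_subset]])
      qed
      have SUf: "S (U - f) = S U - \<Union>T" using S_diff[of U f] unfolding T_def by simp
      have Tsub: "T \<subseteq> full (S U)" unfolding T_def full_S by auto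
      have ch: "c ^ card T * cmod (P (S U - \<Union>T)) \<le> cmod (P (S U))"
        using chain[OF A SUV satS cSU Tsub] .
      have cardT: "card T \<le> k - 1"
      proof -
        have "card T \<le> card (f - {v})"
        proof (rule card_meet)
          show "T \<subseteq> M" unfolding T_def full_def by auto
          show "finite (f - {v})" using finedge fE by auto
          show "\<forall>B\<in>T. B \<inter> (f - {v}) \<noteq> {}"
          proof
            fix B assume "B \<in> T"
            hence "B \<inter> f \<noteq> {}" "v \<notin> B" using vU unfolding T_def S_def by auto
            thus "B \<inter> (f - {v}) \<noteq> {}" by auto
          qed
        qed
        thus ?thesis using unif fE finedge by auto
      qed
      hence pw: "c ^ (k-1) \<le> c ^ card T" using c0 c1 by (simp add: power_decreasing)
      have "c^(k-1) * cmod (P (U - f)) \<le> c^(k-1) * cmod (P (S (U - f)))"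
        using b1 ckpos by simp
      also have "\<dots> \<le> c ^ card T * cmod (P (S U - \<Union>T))"
        using pw SUf by (simp add: mult_right_mono)
      also have "\<dots> \<le> cmod (P (S U))" using ch .
      finally show ?thesis .
    qed
    have cF: "real (card F) * cmod lam \<le> c^(k-1) * (1-c)"
      using cfact[of v F] vU UV FnM unfolding F_def by auto
    have "c^(k-1) * cmod (P U) \<le> cmod lam * (\<Sum>f\<in>F. c^(k-1) * cmod (P (U - f)))"
    proof -
      have "cmod (\<Sum>f\<in>F. P (U - f)) \<le> (\<Sum>f\<in>F. cmod (P (U - f)))" by (rule norm_sum)
      hence h: "c^(k-1) * cmod (\<Sum>f\<in>F. P (U - f)) \<le> (\<Sum>f\<in>F. c^(k-1) * cmod (P (U - f)))"
        using ckpos by (simp add: sum_distrib_left[symmetric])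
      have e: "c^(k-1) * cmod (P U) = cmod lam * (c^(k-1) * cmod (\<Sum>f\<in>F. P (U - f)))"
        unfolding rec norm_mult by (simp only: mult.left_commute)
      show ?thesis unfolding e by (rule mult_left_mono[OF h]) simp
    qed
    also have "\<dots> \<le> cmod lam * (\<Sum>f\<in>F. cmod (P (S U)))"
    proof (rule mult_left_mono)
      show "(\<Sum>f\<in>F. c^(k-1) * cmod (P (U - f))) \<le> (\<Sum>f\<in>F. cmod (P (S U)))"
        by (rule sum_mono) (rule each)
    qed simp
    also have "\<dots> = real (card F) * cmod lam * cmod (P (S U))" by simp
    also have "\<dots> \<le> c^(k-1) * (1-c) * cmod (P (S U))"
      using cF by (simp add: mult_right_mono)
    also have "\<dots> \<le> c^(k-1) * cmod (P (S U))"
      using ckpos c0 by (simp add: mult_right_mono)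
    finally have "cmod (P U) \<le> cmod (P (S U))" using ckpos by simp
    thus ?thesis using False by auto
  qed
qed

lemma PV_nonzero: "P V \<noteq> 0"
proof -
  have A: "\<And>W B. W \<subseteq> V \<Longrightarrow> card W < card V + 1 \<Longrightarrow> S W = W \<Longrightarrow> B \<in> M \<Longrightarrow> B \<subseteq> W \<Longrightarrow>
      c * cmod (P (W - B)) \<le> cmod (P W)"
  proof -
    fix W B assume a: "W \<subseteq> V" "card W < card V + 1" "S W = W" "B \<in> M" "B \<subseteq> W"
    have "S W = W \<longrightarrow> (\<forall>B\<in>M. B \<subseteq> W \<longrightarrow> c * cmod (P (W - B)) \<le> cmod (P W))"
      using main[OF a(1)] by (rule conjunct1)
    hence "\<forall>B\<in>M. B \<subseteq> W \<longrightarrow> c * cmod (P (W - B)) \<le> cmod (P W)" using a(3) by (rule mp)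
    hence "B \<subseteq> W \<longrightarrow> c * cmod (P (W - B)) \<le> cmod (P W)" using a(4) by (rule bspec)
    thus "c * cmod (P (W - B)) \<le> cmod (P W)" using a(5) by (rule mp)
  qed
  have fullV: "full V = M" unfolding full_def using MV by auto
  have SV: "S V = V" unfolding S_def fullV MV ..
  have "c ^ card M * cmod (P (V - \<Union>M)) \<le> cmod (P V)"
    by (rule chain[OF A _ SV]) (auto simp: fullV)
  hence "c ^ card M \<le> cmod (P V)" using MV P_empty by simp
  moreover have "c ^ card M > 0" using c0 by simp
  ultimately show ?thesis by auto
qed

end
context pmz
begin

lemma card_union_blocks:
  assumes "X \<subseteq> E" "\<forall>e\<in>X. \<forall>f\<in>X. e \<noteq> f \<longrightarrow> e \<inter> f = {}"
  shows "card (\<Union>X) = k * card X"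
proof -
  have pw: "pairwise disjnt X" using assms(2) unfolding pairwise_def disjnt_def by blast
  have fin: "finite A" if "A \<in> X" for A
  proof -
    have "A \<in> E" using that assms(1) by (rule subsetD[rotated])
    thus ?thesis by (rule finedge)
  qed
  have "card (\<Union>X) = sum card X" by (rule card_Union_disjoint[OF pw fin])
  also have "\<dots> = sum (\<lambda>_. k) X" by (rule sum.cong[OF refl]) (use assms(1) unif in auto)
  also have "\<dots> = k * card X" by simp
  finally show ?thesis .
qed

lemma symdiff_card:
  assumes "N \<in> pms V"
  shows "card (M - N \<union> (N - M)) = 2 * card (N - M)"
proof -
  have NE: "N \<subseteq> E" and Nd: "\<forall>e\<in>N. \<forall>f\<in>N. e \<noteq> f \<longrightarrow> e \<inter> f = {}" and NV: "\<Union>N = V"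
    using assms unfolding pms_def by auto
  have finMN: "finite (M - N)" using finM by auto
  have finNM: "finite (N - M)" using NE finE finite_subset by blast
  have eqU: "\<Union>(M - N) = \<Union>(N - M)"
  proof
    show "\<Union>(M - N) \<subseteq> \<Union>(N - M)"
    proof
      fix x assume "x \<in> \<Union>(M - N)"
      then obtain B where B: "B \<in> M" "B \<notin> N" "x \<in> B" by auto
      hence "x \<in> V" using MV by auto
      then obtain e where e: "e \<in> N" "x \<in> e" using NV by auto
      have "e \<notin> M" using M_unique[of e B x] B e by auto
      thus "x \<in> \<Union>(N - M)" using e by auto
    qed
    show "\<Union>(N - M) \<subseteq> \<Union>(M - N)"
    proof
      fix x assume "x \<in> \<Union>(N - M)"
      then obtain e where e: "e \<in> N" "e \<notin> M" "x \<in> e" by auto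
      hence "x \<in> V" using NV by auto
      then obtain B where B: "B \<in> M" "x \<in> B" using MV by auto
      have "B \<notin> N"
      proof
        assume BN: "B \<in> N"
        have "B \<noteq> e" using B(1) e(2) by auto
        hence "B \<inter> e = {}" using Nd BN e(1) by auto
        thus False using B(2) e(3) by auto
      qed
      thus "x \<in> \<Union>(M - N)" using B by auto
    qed
  qed
  have s1: "M - N \<subseteq> E" using ME by auto
  have d1: "\<forall>e\<in>M - N. \<forall>f\<in>M - N. e \<noteq> f \<longrightarrow> e \<inter> f = {}" using Mdisj by simp
  have c1: "card (\<Union>(M - N)) = k * card (M - N)" using card_union_blocks[OF s1 d1] .
  have s2: "N - M \<subseteq> E" using NE by auto
  have d2: "\<forall>e\<in>N - M. \<forall>f\<in>N - M. e \<noteq> f \<longrightarrow> e \<inter> f = {}" using Nd by simp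
  have c2: "card (\<Union>(N - M)) = k * card (N - M)" using card_union_blocks[OF s2 d2] .
  have "card (M - N) = card (N - M)" using c1 c2 eqU k1 by simp
  moreover have "card (M - N \<union> (N - M)) = card (M - N) + card (N - M)"
    using card_Un_disjoint[OF finMN finNM] by auto
  ultimately show ?thesis by simp
qed

lemma Z_eq:
  assumes "lam = z ^ 2"
  shows "Z_pm V E M z = P V"
proof -
  have set: "{M'. perfect_matching V E M'} = pms V"
    unfolding perfect_matching_def pms_def ..
  show ?thesis
    unfolding Z_pm_def P_def set
    by (rule sum.cong[OF refl]) (simp add: symdiff_card power_mult assms)
qed

end

theorem mainTheorem17:
  fixes V :: "'a set" and E :: "'a set set" and M :: "'a set set" and k :: nat and z :: complex
  assumes "k \<ge> 2"
    and "hypergraph V E"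
    and "uniform k E"
    and "perfect_matching V E M"
    and "cmod z \<le> 1 / ((real (max_degree V E) - 1 + real k) * exp 1)"
  shows "Z_pm V E M z \<noteq> 0"
proof -
  define c :: real where "c = 1 - 1 / (2 * real k)"
  have kr: "real k \<ge> 2" using assms(1) by simp
  have c0: "c > 0" unfolding c_def using kr by (simp add: field_simps)
  have c1: "c \<le> 1" unfolding c_def using kr by simp
  have finV: "finite V" and EV: "\<forall>e\<in>E. e \<subseteq> V" using assms(2) unfolding hypergraph_def by auto
  have unif: "\<forall>e\<in>E. card e = k" using assms(3) unfolding uniform_def by auto
  have finE: "finite E"
  proof -
    have "E \<subseteq> Pow V" using EV by auto
    thus ?thesis using finV finite_subset by blast
  qed
  have ME: "M \<subseteq> E" and MV: "\<Union>M = V" using assms(4) unfolding perfect_matching_def by auto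
  define D where "D = real (max_degree V E) - 1"
  have lower: "c^(k-1) * (1 - c) \<ge> 1 / (4 * real k)"
  proof -
    have "1 + real (k-1) * (- 1 / (2 * real k)) \<le> (1 + (- 1 / (2 * real k))) ^ (k-1)"
      by (rule Bernoulli_inequality) (use kr in \<open>simp add: field_simps\<close>)
    hence b: "1 + real (k-1) * (- 1 / (2 * real k)) \<le> c ^ (k-1)" unfolding c_def by simp
    have "real (k-1) * (1 / (2 * real k)) \<le> 1/2"
      using kr by (simp add: field_simps of_nat_diff)
    hence half: "c ^ (k-1) \<ge> 1/2" using b by simp
    have "1 - c = 1 / (2 * real k)" unfolding c_def by simp
    hence e: "c^(k-1) * (1 - c) = c^(k-1) / (2 * real k)" by simp
    have "(1/2) / (2 * real k) \<le> c^(k-1) / (2 * real k)"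
      by (rule divide_right_mono) (use half kr in auto)
    thus ?thesis unfolding e by simp
  qed
  have cond: "\<forall>v\<in>V. real (card {f\<in>E. v \<in> f \<and> f \<notin> M}) * cmod (z^2) \<le> c^(k-1) * (1-c)"
  proof
    fix v assume v: "v \<in> V"
    define N where "N = card {f\<in>E. v \<in> f \<and> f \<notin> M}"
    obtain B where B: "B \<in> M" "v \<in> B" using MV v by auto
    have sub: "insert B {f\<in>E. v \<in> f \<and> f \<notin> M} \<subseteq> {e\<in>E. v \<in> e}" using B ME by auto
    have "N + 1 = card (insert B {f\<in>E. v \<in> f \<and> f \<notin> M})"
      unfolding N_def using B finE by simp
    also have "\<dots> \<le> hdegree E v" unfolding hdegree_def using sub finE card_mono by (metis (no_types, lifting) finite_subset mem_Collect_eq subsetI)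
    also have "\<dots> \<le> max_degree V E" unfolding max_degree_def
      using v finV by (intro Max_ge) auto
    finally have ND: "real N \<le> D" unfolding D_def by simp
    have D0: "D \<ge> 0" using ND by simp
    have pos: "D + real k > 0" using D0 kr by simp
    have "cmod z \<le> 1 / ((D + real k) * exp 1)" using assms(5) unfolding D_def by simp
    also have "\<dots> \<le> 1 / (D + real k)"
    proof -
      have "D + real k \<le> (D + real k) * exp 1" using pos by simp
      thus ?thesis using pos by (intro divide_left_mono) auto
    qed
    finally have za: "cmod z \<le> 1 / (D + real k)" .
    have "cmod (z^2) = (cmod z)^2" by (simp add: norm_power)
    also have "\<dots> \<le> (1 / (D + real k))^2" using za by (simp add: power_mono)
    finally have z2: "cmod (z^2) \<le> 1 / (D + real k)^2" by (simp add: power_one_over)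
    have "real N * cmod (z^2) \<le> D * (1 / (D + real k)^2)"
      by (rule mult_mono[OF ND z2 D0 norm_ge_zero])
    also have "\<dots> \<le> 1 / (4 * real k)"
    proof -
      have "4 * real k * D \<le> (D + real k)^2"
        using sum_squares_ge_zero[of "D - real k" 0] by (simp add: power2_eq_square algebra_simps)
      thus ?thesis using pos kr by (simp add: field_simps)
    qed
    also have "\<dots> \<le> c^(k-1) * (1 - c)" using lower .
    finally show "real (card {f\<in>E. v \<in> f \<and> f \<notin> M}) * cmod (z^2) \<le> c^(k-1) * (1-c)"
      unfolding N_def .
  qed
  interpret pmz V E M k "z^2" c
    by unfold_locales (use finV EV unif assms(1,4) c0 c1 cond in auto)
  show ?thesis using Z_eq[of z] PV_nonzero by simp
qed

end
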